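(* Let $G_1=(V,D_1)$ and $G_2=(V,D_2)$ be directed graphs with the same Jacobian matroid. If two nodes $i\neq j$ are adjacent or have a common child in one of the graphs, then they are adjacent or have a common child in the other graph.
   Context: A directed graph $G=(V,D)$ has edge set $D\subseteq V\times V$ of ordered pairs $(i,j)$, $i\neq j$. $\Lambda$ is the $V\times V$ matrix with indeterminate entries $\lambda_{ij}$ for $(i,j)\in D$ and zeros elsewhere, and $s$ is a further indeterminate. Let $\psi_G(\Lambda,s)=s(I-\Lambda)(I-\Lambda)^T=K$. The transposed Jacobian $J(\psi_G)$ has rows indexed by $\{\lambda_{kl}:(k,l)\in D\}\cup\{s\}$ and columns indexed by $K_{ij}$, $i\le j$, with entries $\partial K_{ij}/\partial\theta$. The Jacobian matroid of $G$ is the matroid on the column labels $\{K_{ij}\}$ in which a set is independent iff its columns are linearly independent over $\mathbb{R}(\lambda,s)$. *)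

theory Defs
  imports "HOL-Analysis.Analysis"
begin

text \<open>Parameters: \<open>Some (k,l)\<close> stands for \<open>\<lambda>_kl\<close> ((k,l) in D), \<open>None\<close> stands for s.\<close>

definition digraph :: "'v set \<Rightarrow> ('v \<times> 'v) set \<Rightarrow> bool" where
  "digraph V D \<longleftrightarrow> D \<subseteq> V \<times> V \<and> (\<forall>i. (i, i) \<notin> D)"

definition params :: "('v \<times> 'v) set \<Rightarrow> ('v \<times> 'v) option set" where
  "params D = insert None (Some ` D)"

definition Lam :: "('v \<times> 'v) set \<Rightarrow> (('v \<times> 'v) option \<Rightarrow> real) \<Rightarrow> 'v \<Rightarrow> 'v \<Rightarrow> real" where
  "Lam D \<theta> i j = (if (i, j) \<in> D then \<theta> (Some (i, j)) else 0)"

text \<open>\<open>K = s (I - \<Lambda>)(I - \<Lambda>)^T\<close>, entry (i,j).\<close>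
definition Kmat :: "'v set \<Rightarrow> ('v \<times> 'v) set \<Rightarrow> (('v \<times> 'v) option \<Rightarrow> real) \<Rightarrow> 'v \<Rightarrow> 'v \<Rightarrow> real" where
  "Kmat V D \<theta> i j = \<theta> None *
     (\<Sum>k\<in>V. ((if i = k then 1 else 0) - Lam D \<theta> i k) * ((if j = k then 1 else 0) - Lam D \<theta> j k))"

text \<open>Column labels \<open>K_ij\<close>, \<open>i \<le> j\<close>.\<close>
definition jac_cols :: "('v::linorder) set \<Rightarrow> ('v \<times> 'v) set" where
  "jac_cols V = {(i, j). i \<in> V \<and> j \<in> V \<and> i \<le> j}"

definition jac_entry :: "'v set \<Rightarrow> ('v \<times> 'v) set \<Rightarrow> ('v \<times> 'v) option \<Rightarrow> 'v \<times> 'v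
    \<Rightarrow> (('v \<times> 'v) option \<Rightarrow> real) \<Rightarrow> real" where
  "jac_entry V D x c \<theta> = deriv (\<lambda>t. Kmat V D (\<theta>(x := t)) (fst c) (snd c)) (\<theta> x)"

text \<open>Real polynomial functions in the variables \<open>X\<close> (= the polynomial ring \<open>\<real>[X]\<close>,
  since \<open>\<real>\<close> is infinite).\<close>
inductive poly_fun :: "'a set \<Rightarrow> (('a \<Rightarrow> real) \<Rightarrow> real) \<Rightarrow> bool" for X where
  const: "poly_fun X (\<lambda>\<theta>. c)"
| var: "x \<in> X \<Longrightarrow> poly_fun X (\<lambda>\<theta>. \<theta> x)"
| add: "poly_fun X p \<Longrightarrow> poly_fun X q \<Longrightarrow> poly_fun X (\<lambda>\<theta>. p \<theta> + q \<theta>)"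
| mult: "poly_fun X p \<Longrightarrow> poly_fun X q \<Longrightarrow> poly_fun X (\<lambda>\<theta>. p \<theta> * q \<theta>)"

text \<open>Independence in the Jacobian matroid: the columns in S are linearly independent over
  \<open>\<real>(\<lambda>,s)\<close>; equivalently (clearing denominators) there is no nontrivial linear relation
  with coefficients in the polynomial ring \<open>\<real>[\<lambda>,s]\<close>.\<close>
definition jac_indep :: "('v::linorder) set \<Rightarrow> ('v \<times> 'v) set \<Rightarrow> ('v \<times> 'v) set \<Rightarrow> bool" where
  "jac_indep V D S \<longleftrightarrow> S \<subseteq> jac_cols V \<and>
     \<not> (\<exists>c. (\<forall>col\<in>S. poly_fun (params D) (c col)) \<and> (\<exists>col\<in>S. c col \<noteq> (\<lambda>_. 0)) \<and>
           (\<forall>x\<in>params D. \<forall>\<theta>. (\<Sum>col\<in>S. c col \<theta> * jac_entry V D x col \<theta>) = 0))"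

definition same_jacobian_matroid :: "('v::linorder) set \<Rightarrow> ('v \<times> 'v) set \<Rightarrow> ('v \<times> 'v) set \<Rightarrow> bool" where
  "same_jacobian_matroid V D1 D2 \<longleftrightarrow> (\<forall>S. jac_indep V D1 S \<longleftrightarrow> jac_indep V D2 S)"

definition adjacent :: "('v \<times> 'v) set \<Rightarrow> 'v \<Rightarrow> 'v \<Rightarrow> bool" where
  "adjacent D i j \<longleftrightarrow> (i, j) \<in> D \<or> (j, i) \<in> D"

definition common_child :: "('v \<times> 'v) set \<Rightarrow> 'v \<Rightarrow> 'v \<Rightarrow> bool" where
  "common_child D i j \<longleftrightarrow> (\<exists>k. (i, k) \<in> D \<and> (j, k) \<in> D)"

end

theory Submission
  imports Defs
begin

lemma poly_fun_cont:
  assumes "poly_fun X p"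
  shows "continuous_on UNIV (\<lambda>t. p (\<theta>(x:=t)))"
  using assms
proof induction
  case (var y)
  then show ?case by (cases "y = x") (auto intro!: continuous_intros)
qed (auto intro!: continuous_intros)

lemma perturb:
  assumes "poly_fun X p" "p \<theta> \<noteq> 0"
  shows "\<exists>t. t \<noteq> r \<and> p (\<theta>(x:=t)) \<noteq> 0"
proof -
  have "continuous (at (\<theta> x)) (\<lambda>t. p (\<theta>(x:=t)))"
    using poly_fun_cont[OF assms(1)] by (simp add: continuous_on_eq_continuous_at)
  moreover have "(\<lambda>t. p (\<theta>(x:=t))) (\<theta> x) \<noteq> 0" using assms(2) by simp
  ultimately obtain e where e: "e > 0" "\<forall>y. dist (\<theta> x) y < e \<longrightarrow> p (\<theta>(x:=y)) \<noteq> 0"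
    using continuous_at_avoid by blast
  have d1: "dist (\<theta> x) (\<theta> x + e/2) < e" "dist (\<theta> x) (\<theta> x + e/4) < e"
    using e(1) by (auto simp: dist_real_def)
  show ?thesis
  proof (cases "\<theta> x + e/2 = r")
    case True
    then have "\<theta> x + e/4 \<noteq> r" using e(1) by auto
    then show ?thesis using e d1 by blast
  next
    case False
    then show ?thesis using e d1 by blast
  qed
qed

definition Sfun where
  "Sfun V D \<theta> a b = (\<Sum>k\<in>V. ((if a = k then 1 else 0) - Lam D \<theta> a k) * ((if b = k then 1 else 0) - Lam D \<theta> b k))"

lemma Kmat_Sfun: "Kmat V D \<theta> a b = \<theta> None * Sfun V D \<theta> a b"
  by (simp add: Kmat_def Sfun_def)

lemma Lam_upd: "Lam D (\<theta>(Some e := t)) u v = (if (u,v) = e \<and> (u,v) \<in> D then t else Lam D \<theta> u v)"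
  by (auto simp: Lam_def)

lemma Lam_None: "Lam D (\<theta>(None := t)) = Lam D \<theta>"
  by (auto simp: Lam_def fun_eq_iff)

lemma Lam_notin: "(u,v) \<notin> D \<Longrightarrow> Lam D \<theta> u v = 0"
  by (simp add: Lam_def)

lemma Sfun_split:
  assumes "finite V" "digraph V D" "a \<in> V" "b \<in> V" "a \<noteq> b"
  shows "Sfun V D \<theta> a b = - Lam D \<theta> b a - Lam D \<theta> a b + (\<Sum>k\<in>V-{a,b}. Lam D \<theta> a k * Lam D \<theta> b k)"
proof -
  have V: "V = insert a (insert b (V-{a,b}))" using assms by auto
  have aa: "Lam D \<theta> a a = 0" "Lam D \<theta> b b = 0" using assms(2) by (auto simp: digraph_def Lam_def)
  have "Sfun V D \<theta> a b = (\<Sum>k\<in>insert a (insert b (V-{a,b})). ((if a = k then 1 else 0) - Lam D \<theta> a k) * ((if b = k then 1 else 0) - Lam D \<theta> b k))"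
    unfolding Sfun_def using V by simp
  also have "\<dots> = (1 - Lam D \<theta> a a) * (0 - Lam D \<theta> b a) + ((0 - Lam D \<theta> a b) * (1 - Lam D \<theta> b b)
      + (\<Sum>k\<in>V-{a,b}. ((if a = k then 1 else 0) - Lam D \<theta> a k) * ((if b = k then 1 else 0) - Lam D \<theta> b k)))"
    using assms by (simp add: sum.insert)
  also have "(\<Sum>k\<in>V-{a,b}. ((if a = k then 1 else 0) - Lam D \<theta> a k) * ((if b = k then 1 else 0) - Lam D \<theta> b k))
      = (\<Sum>k\<in>V-{a,b}. Lam D \<theta> a k * Lam D \<theta> b k)"
    by (rule sum.cong) auto
  finally show ?thesis using aa by simp
qed

lemma Sfun_sym: "Sfun V D \<theta> a b = Sfun V D \<theta> b a"
  unfolding Sfun_def by (simp add: mult.commute)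

lemma good_point:
  assumes "finite V" "digraph V D" "a \<in> V" "b \<in> V" "a \<noteq> b"
    and "adjacent D a b \<or> common_child D a b"
    and "poly_fun X p" "p \<theta>0 \<noteq> 0"
  shows "\<exists>\<theta>. p \<theta> \<noteq> 0 \<and> Sfun V D \<theta> a b \<noteq> 0"
proof -
  have adj: "\<exists>\<theta>. p \<theta> \<noteq> 0 \<and> Sfun V D \<theta> a b \<noteq> 0"
    if "(a,b) \<in> D" "a \<in> V" "b \<in> V" "a \<noteq> b" for a b
  proof -
    define R where "R = - Lam D \<theta>0 b a + (\<Sum>k\<in>V-{a,b}. Lam D \<theta>0 a k * Lam D \<theta>0 b k)"
    obtain t where t: "t \<noteq> R" "p (\<theta>0(Some (a,b) := t)) \<noteq> 0"
      using perturb[OF assms(7,8)] by blast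
    have "Sfun V D (\<theta>0(Some (a,b) := t)) a b = R - t"
      unfolding R_def using Sfun_split[OF assms(1,2) that(2,3,4)] that
      by (simp add: Lam_upd)
    then show ?thesis using t by force
  qed
  show ?thesis
  proof (cases "adjacent D a b")
    case True
    then show ?thesis using adj[of a b] adj[of b a] assms Sfun_sym unfolding adjacent_def by metis
  next
    case False
    then have nab: "(a,b) \<notin> D" "(b,a) \<notin> D" by (auto simp: adjacent_def)
    from False assms(6) obtain k0 where k0: "(a,k0) \<in> D" "(b,k0) \<in> D"
      by (auto simp: common_child_def)
    have k0V: "k0 \<in> V" "k0 \<noteq> a" "k0 \<noteq> b" using k0 assms(2) nab by (auto simp: digraph_def)
    obtain t1 where t1: "t1 \<noteq> 0" "p (\<theta>0(Some (b,k0) := t1)) \<noteq> 0"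
      using perturb[OF assms(7,8)] by blast
    define \<theta>1 where "\<theta>1 = \<theta>0(Some (b,k0) := t1)"
    define R where "R = (\<Sum>k\<in>V-{a,b,k0}. Lam D \<theta>1 a k * Lam D \<theta>1 b k)"
    obtain t2 where t2: "t2 \<noteq> - R / t1" "p (\<theta>1(Some (a,k0) := t2)) \<noteq> 0"
      using perturb[OF assms(7) t1(2)[folded \<theta>1_def]] by blast
    have L1: "Lam D \<theta>1 b k0 = t1" using k0 by (simp add: \<theta>1_def Lam_def)
    have VV: "V-{a,b} = insert k0 (V-{a,b,k0})" using k0V by auto
    have "Sfun V D (\<theta>1(Some (a,k0) := t2)) a b
        = (\<Sum>k\<in>V-{a,b}. Lam D (\<theta>1(Some (a,k0) := t2)) a k * Lam D (\<theta>1(Some (a,k0) := t2)) b k)"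
      using Sfun_split[OF assms(1-5)] nab by (simp add: Lam_notin)
    also have "\<dots> = Lam D (\<theta>1(Some (a,k0) := t2)) a k0 * Lam D (\<theta>1(Some (a,k0) := t2)) b k0
        + (\<Sum>k\<in>V-{a,b,k0}. Lam D (\<theta>1(Some (a,k0) := t2)) a k * Lam D (\<theta>1(Some (a,k0) := t2)) b k)"
      unfolding VV using assms(1) by (simp add: sum.insert)
    also have "\<dots> = t2 * t1 + R"
      unfolding R_def using k0 L1 assms(5) by (auto simp: Lam_upd intro!: sum.cong)
    finally have "Sfun V D (\<theta>1(Some (a,k0) := t2)) a b = t2 * t1 + R" .
    moreover have "t2 * t1 + R \<noteq> 0"
    proof
      assume "t2 * t1 + R = 0"
      then have "t2 = - R / t1" using t1(1) by (simp add: field_simps)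
      then show False using t2(1) by simp
    qed
    ultimately show ?thesis using t2(2) by metis
  qed
qed

lemma jac_entry_None: "jac_entry V D None (a,b) \<theta> = Sfun V D \<theta> a b"
proof -
  have "(\<lambda>t. Kmat V D (\<theta>(None := t)) a b) = (\<lambda>t. t * Sfun V D \<theta> a b)"
    by (auto simp: Kmat_Sfun Sfun_def Lam_None fun_eq_iff)
  moreover have "((\<lambda>t. t * Sfun V D \<theta> a b) has_field_derivative Sfun V D \<theta> a b) (at (\<theta> None))"
    by (auto intro!: derivative_eq_intros)
  ultimately show ?thesis unfolding jac_entry_def
    by (simp add: DERIV_imp_deriv)
qed

lemma indep_iff:
  assumes "finite V" "digraph V D" "a \<in> V" "b \<in> V" "a < b"
  shows "jac_indep V D {(a,b)} \<longleftrightarrow> (adjacent D a b \<or> common_child D a b)"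
proof
  assume ind: "jac_indep V D {(a,b)}"
  show "adjacent D a b \<or> common_child D a b"
  proof (rule ccontr)
    assume nn: "\<not> (adjacent D a b \<or> common_child D a b)"
    have K0: "Kmat V D \<theta> a b = 0" for \<theta>
    proof -
      have "(\<Sum>k\<in>V-{a,b}. Lam D \<theta> a k * Lam D \<theta> b k) = 0"
        using nn by (intro sum.neutral) (auto simp: Lam_def common_child_def)
      then show ?thesis using Sfun_split[OF assms(1-4)] assms(5) nn
        by (simp add: Kmat_Sfun Lam_notin adjacent_def)
    qed
    have J0: "jac_entry V D x (a,b) \<theta> = 0" for x \<theta>
      unfolding jac_entry_def by (simp add: K0 DERIV_imp_deriv)
    have "poly_fun (params D) (\<lambda>_. 1)" by (rule poly_fun.const)
    then show False using ind J0
      unfolding jac_indep_def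
      apply simp
      apply (elim conjE)
      apply (drule spec[of _ "\<lambda>_ _. 1"])
      by (simp add: fun_eq_iff)
  qed
next
  assume ac: "adjacent D a b \<or> common_child D a b"
  have cols: "{(a,b)} \<subseteq> jac_cols V" using assms by (auto simp: jac_cols_def)
  show "jac_indep V D {(a,b)}"
    unfolding jac_indep_def
  proof (intro conjI cols notI)
    assume "\<exists>c. (\<forall>col\<in>{(a, b)}. poly_fun (params D) (c col)) \<and> (\<exists>col\<in>{(a, b)}. c col \<noteq> (\<lambda>_. 0)) \<and>
      (\<forall>x\<in>params D. \<forall>\<theta>. (\<Sum>col\<in>{(a, b)}. c col \<theta> * jac_entry V D x col \<theta>) = 0)"
    then obtain p where p: "poly_fun (params D) p" "p \<noteq> (\<lambda>_. 0)"
      "\<forall>\<theta>. p \<theta> * jac_entry V D None (a,b) \<theta> = 0"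
      by (auto simp: params_def)
    obtain \<theta>0 where "p \<theta>0 \<noteq> 0" using p(2) by auto
    then obtain \<theta> where "p \<theta> \<noteq> 0" "Sfun V D \<theta> a b \<noteq> 0"
      using good_point[OF assms(1-4) _ ac p(1)] assms(5) by auto
    then show False using p(3) by (auto simp: jac_entry_None)
  qed
qed

theorem lemma3p6:
  fixes V :: "'v::linorder set" and D1 D2 :: "('v \<times> 'v) set" and i j :: 'v
  assumes "finite V"
    and "digraph V D1" and "digraph V D2"
    and "same_jacobian_matroid V D1 D2"
    and "i \<in> V" and "j \<in> V" and "i \<noteq> j"
  shows "(adjacent D1 i j \<or> common_child D1 i j) \<longleftrightarrow> (adjacent D2 i j \<or> common_child D2 i j)"
proof -
  define a where "a = min i j"
  define b where "b = max i j"
  have ab: "a \<in> V" "b \<in> V" "a < b" using assms by (auto simp: a_def b_def min_def max_def)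
  have sym: "(adjacent D a b \<or> common_child D a b) \<longleftrightarrow> (adjacent D i j \<or> common_child D i j)" for D
    by (cases "i \<le> j") (auto simp: a_def b_def adjacent_def common_child_def)
  show ?thesis
    using indep_iff[OF assms(1,2) ab] indep_iff[OF assms(1,3) ab] assms(4) sym
    unfolding same_jacobian_matroid_def by metis
qed

end
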